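(* Let $a\geq 3$ and $m\geq 2a^2-a+2$ be integers. Every 2-coloring of $[C(m,a)]$ (with colors red and blue) in which both $a-2$ and $a-1$ are red admits a monochromatic solution of $L(m,a)$ in $[C(m,a)]$.
   Context: For integers $m\geq 3$, $a\geq 1$, $L(m,a)$ denotes the equation $x_1+x_2+\cdots+x_{m-1}=a x_m$. For a positive integer $n$, $[n]=\{1,\dots,n\}$. A solution of $L(m,a)$ in $[n]$ is an $m$-tuple $(x_1,\dots,x_m)\in[n]^m$ (entries not necessarily distinct) satisfying the equation; given a 2-coloring of $[n]$, it is monochromatic if all $x_i$ have the same color. $C(m,a)$ denotes $\left\lceil \frac{m-1}{a}\left\lceil \frac{m-1}{a}\right\rceil\right\rceil$. *)

theory Defs
  imports Complex_Main
begin

definition ceil_div :: "nat \<Rightarrow> nat \<Rightarrow> nat" where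
  "ceil_div p q = nat (ceiling (real p / real q))"

definition Cma :: "nat \<Rightarrow> nat \<Rightarrow> nat" where
  "Cma m a = nat (ceiling ((real (m - 1) / real a) * real (ceil_div (m - 1) a)))"

definition is_solution :: "nat \<Rightarrow> nat \<Rightarrow> nat \<Rightarrow> (nat \<Rightarrow> nat) \<Rightarrow> bool" where
  "is_solution m a n x \<longleftrightarrow> (\<forall>i<m. x i \<in> {1..n}) \<and> (\<Sum>i<m - 1. x i) = a * x (m - 1)"

text \<open>A 2-coloring is a map col :: nat => bool (True = red, False = blue), relevant on [n].
  A solution is monochromatic if all entries get the same color.\<close>
definition monochromatic :: "(nat \<Rightarrow> bool) \<Rightarrow> nat \<Rightarrow> (nat \<Rightarrow> nat) \<Rightarrow> bool" where
  "monochromatic col m x \<longleftrightarrow> (\<forall>i<m. \<forall>j<m. col (x i) = col (x j))"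

end

theory Submission imports Defs begin
lemma sum_const_range: "(\<Sum>p\<in>{lo..<hi}. (c::nat)) = (hi - lo) * c" by simp

lemma mono3:
  assumes ij: "i + j \<le> k"
    and u1: "u1 \<in> {1..n}" and u2: "u2 \<in> {1..n}" and u3: "u3 \<in> {1..n}" and z: "z \<in> {1..n}"
    and c1: "col u1 = col z" and c2: "col u2 = col z" and c3: "col u3 = col z"
    and eq: "i*u1 + j*u2 + (k-i-j)*u3 = a*z"
  shows "\<exists>x. is_solution (Suc k) a n x \<and> monochromatic col (Suc k) x"
proof -
  define x where "x = (\<lambda>p. if p < i then u1 else if p < i+j then u2 else if p < k then u3 else z)"
  have "(\<Sum>p<k. x p) = (\<Sum>p\<in>{0..<i}. x p) + (\<Sum>p\<in>{i..<i+j}. x p) + (\<Sum>p\<in>{i+j..<k}. x p)"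
    using ij by (simp add: lessThan_atLeast0 sum.atLeastLessThan_concat)
  also have "(\<Sum>p\<in>{0..<i}. x p) = (\<Sum>p\<in>{0..<i}. u1)" by (rule sum.cong) (auto simp: x_def)
  also have "(\<Sum>p\<in>{i..<i+j}. x p) = (\<Sum>p\<in>{i..<i+j}. u2)" by (rule sum.cong) (auto simp: x_def)
  also have "(\<Sum>p\<in>{i+j..<k}. x p) = (\<Sum>p\<in>{i+j..<k}. u3)" by (rule sum.cong) (auto simp: x_def)
  finally have s: "(\<Sum>p<k. x p) = a*z" using eq by (simp add: mult.commute)
  have "is_solution (Suc k) a n x"
    unfolding is_solution_def using s u1 u2 u3 z ij by (auto simp: x_def)
  moreover have "monochromatic col (Suc k) x"
    unfolding monochromatic_def using c1 c2 c3 by (auto simp: x_def)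
  ultimately show ?thesis by blast
qed

lemma block_split:
  fixes n lo hi s :: nat
  assumes "0 < n" "n*lo \<le> s" "s \<le> n*hi"
  shows "\<exists>u v j. lo \<le> u \<and> u \<le> hi \<and> lo \<le> v \<and> v \<le> hi \<and> j \<le> n \<and> j*u + (n-j)*v = s"
proof -
  define b where "b = s div n"
  define e where "e = s mod n"
  have s: "s = n*b + e" by (simp add: b_def e_def)
  have en: "e < n" using assms(1) by (simp add: e_def)
  have "n*lo < n*(b+1)" using s en assms(2) by (simp add: algebra_simps)
  hence "lo < b+1" using mult_less_cancel1[of n lo "b+1"] by simp
  hence lob: "lo \<le> b" by simp
  show ?thesis
  proof (cases "e = 0")
    case True
    hence "n*b \<le> n*hi" using s assms(3) by simp
    hence "b \<le> hi" using assms(1) by simp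
    thus ?thesis using True s lob by (intro exI[of _ b] exI[of _ b] exI[of _ 0]) auto
  next
    case False
    hence "n*b < n*hi" using s assms(3) by linarith
    hence "b < hi" using mult_less_cancel1[of n b hi] by simp
    moreover have "e*(b+1) + (n-e)*b = s" using s en
      by (simp add: algebra_simps diff_mult_distrib)
    ultimately show ?thesis using lob en
      by (intro exI[of _ "b+1"] exI[of _ b] exI[of _ e]) auto
  qed
qed

lemma blockT:
  assumes blk: "\<forall>y. lo \<le> y \<and> y \<le> hi \<longrightarrow> col y = c"
    and "1 \<le> lo" "hi \<le> N" "lo \<le> hi"
    and "col w = c" "col z = c" "w \<in> {1..N}" "z \<in> {1..N}" "i < k"
    and "i*w \<le> a*z" "(k-i)*lo \<le> a*z - i*w" "a*z - i*w \<le> (k-i)*hi"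
  shows "\<exists>x. is_solution (Suc k) a N x \<and> monochromatic col (Suc k) x"
proof -
  obtain u v j where uv: "lo \<le> u" "u \<le> hi" "lo \<le> v" "v \<le> hi" "j \<le> k - i"
     "j*u + (k-i-j)*v = a*z - i*w"
    using block_split[of "k-i" lo "a*z - i*w" hi] assms by auto
  show ?thesis
    apply (rule mono3[of i j k w N u v z col a])
    using uv assms by auto
qed

lemma ceil_bounds:
  fixes p b :: nat assumes b: "0 < b"
  shows "p \<le> b * nat (ceiling (real p / real b)) \<and> b * nat (ceiling (real p / real b)) < p + b"
proof -
  define c where "c = ceiling (real p / real b)"
  have "0 \<le> real p / real b" by simp
  hence c0: "0 \<le> c" unfolding c_def by linarith
  have h1: "real p / real b \<le> of_int c" and h2: "of_int c - 1 < real p / real b"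
    using ceiling_correct[of "real p / real b"] by (auto simp: c_def)
  have rc: "real (nat c) = of_int c" using c0 by simp
  have "real p \<le> real b * real (nat c)" using h1 b rc by (simp add: divide_le_eq mult.commute)
  hence a1: "p \<le> b * nat c" by (metis of_nat_le_iff of_nat_mult)
  have "real b * real (nat c) < real p + real b" using h2 b rc
    by (simp add: less_divide_eq algebra_simps)
  hence a2: "b * nat c < p + b" by (metis of_nat_add of_nat_less_iff of_nat_mult)
  show ?thesis using a1 a2 by (simp add: c_def)
qed

lemma Cma_alt: "Cma m a = nat (ceiling (real ((m-1) * ceil_div (m-1) a) / real a))"
  unfolding Cma_def by (simp add: field_simps)

lemma polyF: fixes d e f :: nat shows
 "(f+3)*(f+1)*(2*f*f + 11*f + 15 + e)*(f+3+d) + (f+1)*(f+2)*(2*f*f + 11*f + 16 + e)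
   \<le> (f+3)*(f+3)*(2*f*f + 11*f + 14 + e)*(f+2+d)"
proof -
  have "int ((f+3)*(f+1)*(2*f*f + 11*f + 15 + e)*(f+3+d) + (f+1)*(f+2)*(2*f*f + 11*f + 16 + e)) + int (5*f^3 + 4*d*f^3 + 38*f^2 + 33*d*f^2 + 98*f + 90*d*f + 3*e*f + 2*d*e*f + 85 + 81*d + 7*e + 6*d*e)
   = int ((f+3)*(f+3)*(2*f*f + 11*f + 14 + e)*(f+2+d))"
    by (simp add: algebra_simps power3_eq_cube power2_eq_square)
  thus ?thesis by linarith
qed

lemma polyG: fixes e f g :: nat shows
 "(f+2)*((2*f*f + 11*f + 16 + e)*(2*f+6+g) + f + 2) \<le> (f+3)*(2*f*f + 11*f + 15 + e)*(2*f+5+g)"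
proof -
  have "int ((f+2)*((2*f*f + 11*f + 16 + e)*(2*f+6+g) + f + 2)) + int (2*f^3 + 14*f^2 + 2*f^2*g + 34*f + 10*f*g + e*f + 29 + 13*g + 3*e + e*g)
    = int ((f+3)*(2*f*f + 11*f + 15 + e)*(2*f+5+g))"
    by (simp add: algebra_simps power3_eq_cube power2_eq_square)
  thus ?thesis by linarith
qed

lemma ineqF:
  fixes a k r :: nat
  assumes "3 \<le> a" "2*a*a + 1 \<le> k + a" "a - 1 \<le> r"
  shows "a*(a-2)*(k-1)*(r+1) + (a-2)*(a-1)*k \<le> a*a*(k-2)*r"
proof -
  define f where "f = a - 3"
  have fa: "a = f + 3" using assms(1) f_def by simp
  have "2*a*a = 2*f*f + 12*f + 18" unfolding fa by (simp add: algebra_simps)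
  hence kk: "2*f*f + 11*f + 16 \<le> k" using assms(2) fa by linarith
  define e where "e = k - (2*f*f + 11*f + 16)"
  have ke: "k = 2*f*f + 11*f + 16 + e" using kk e_def by simp
  define d where "d = r - (f+2)"
  have rd: "r = f + 2 + d" using assms(3) fa d_def by simp
  have s: "a - 2 = f + 1" "a - 1 = f + 2" "k - 1 = 2*f*f + 11*f + 15 + e" "k - 2 = 2*f*f + 11*f + 14 + e"
    "r + 1 = f + 3 + d" using fa ke rd by auto
  show ?thesis unfolding s using polyF[of f e d] unfolding fa ke rd by (simp add: ac_simps)
qed

lemma ineqG:
  fixes a k q :: nat
  assumes "3 \<le> a" "2*a*a + 1 \<le> k + a" "2*a \<le> q"
  shows "(a-1)*(k*q+a-1) \<le> a*(k-1)*(q-1)"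
proof -
  define f where "f = a - 3"
  have fa: "a = f + 3" using assms(1) f_def by simp
  have "2*a*a = 2*f*f + 12*f + 18" unfolding fa by (simp add: algebra_simps)
  hence kk: "2*f*f + 11*f + 16 \<le> k" using assms(2) fa by linarith
  define e where "e = k - (2*f*f + 11*f + 16)"
  have ke: "k = 2*f*f + 11*f + 16 + e" using kk e_def by simp
  define g where "g = q - (2*f+6)"
  have qg: "q = 2*f + 6 + g" using assms(3) fa g_def by simp
  have s: "a - 1 = f + 2" "k - 1 = 2*f*f + 11*f + 15 + e" "q - 1 = 2*f+5+g"
    "k*q + a - 1 = k*q + f + 2" using fa ke qg by auto
  show ?thesis unfolding s using polyG[of f e g] unfolding fa ke qg by (simp add: ac_simps)
qed

lemma ceil_up: "0 < (a::nat) \<Longrightarrow> n \<le> a * ((n + a - 1) div a) \<and> a * ((n + a - 1) div a) \<le> n + a - 1"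
proof -
  assume a: "0 < a"
  have e: "a * ((n + a - 1) div a) + (n + a - 1) mod a = n + a - 1" by simp
  have "(n + a - 1) mod a < a" using a by simp
  thus ?thesis using e by linarith
qed

theorem proposition3:
  fixes a m :: nat and col :: "nat \<Rightarrow> bool"
  assumes "a \<ge> 3"
    and "m \<ge> 2 * a^2 - a + 2"
    and "col (a - 2)" and "col (a - 1)"
  shows "\<exists>x. is_solution m a (Cma m a) x \<and> monochromatic col m x"
proof (rule ccontr)
  assume NS: "\<not> ?thesis"
  define k where "k = m - 1"
  have a3: "3 \<le> a" by fact
  have aa: "3*a \<le> a*a" using a3 by simp
  have "a \<le> 2*a^2" using a3 by (simp add: power2_eq_square)
  hence hk: "2*a*a + 1 \<le> k + a" using assms(2) unfolding k_def by (simp add: power2_eq_square)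
  have "2 \<le> m" using assms(2) by linarith
  hence mk: "m = Suc k" unfolding k_def by simp
  have a0: "0 < a" using a3 by simp
  define q where "q = ceil_div k a"
  define C where "C = Cma m a"
  have qb: "k \<le> a*q" "a*q < k + a" using ceil_bounds[OF a0, of k] unfolding q_def ceil_div_def by auto
  have Cd: "C = nat (ceiling (real (k*q) / real a))" unfolding C_def Cma_def q_def k_def
    by (simp add: field_simps)
  have Cb: "k*q \<le> a*C" "a*C < k*q + a" using ceil_bounds[OF a0, of "k*q"] unfolding Cd by auto
  have "a*(2*a) < a*(q+1)" using qb hk by (simp add: algebra_simps)
  hence q2a: "2*a \<le> q" using mult_less_cancel1[of a "2*a" "q+1"] by simp
  have kbig: "4*a \<le> k" using hk aa by linarith
  have h2: "k*(2*a) \<le> k*q" using q2a by (rule mult_le_mono2)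
  have "a*(2*k) = k*(2*a)" by simp
  hence "a*(2*k) \<le> a*C" using h2 Cb(1) by linarith
  hence C2k: "2*k \<le> C" using a0 by simp
  have aak: "a*a \<le> k" using hk aa by linarith
  have noB: "False" if "\<forall>y. lo \<le> y \<and> y \<le> hi \<longrightarrow> col y = c" "1 \<le> lo" "hi \<le> C" "lo \<le> hi"
    "col w = c" "col z = c" "w \<in> {1..C}" "z \<in> {1..C}" "i < k"
    "i*w \<le> a*z" "(k-i)*lo \<le> a*z - i*w" "a*z - i*w \<le> (k-i)*hi" for lo hi c w z i
    using blockT[OF that] NS mk C_def by simp
  have no3: "False" if "i + j \<le> k" "u1 \<in> {1..C}" "u2 \<in> {1..C}" "u3 \<in> {1..C}" "z \<in> {1..C}"
    "col u1 = col z" "col u2 = col z" "col u3 = col z" "i*u1 + j*u2 + (k-i-j)*u3 = a*z" for i j u1 u2 u3 z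
    using mono3[OF that] NS mk C_def by simp
  have kq: "q \<le> k"
  proof (rule ccontr)
    assume "\<not> q \<le> k"
    hence "k+1 \<le> q" by simp
    hence "a*(k+1) \<le> a*q" by (rule mult_le_mono2)
    moreover have "k \<le> a*k" using a0 by simp
    ultimately show False using qb(2) by (simp add: algebra_simps)
  qed
  have kC: "k \<le> C" using C2k by simp
  have blueY: "\<not> col y" if yh: "k*(a-2) \<le> a*y" "a*y \<le> k*(a-1)" for y
  proof
    assume cy: "col y"
    have "k*1 \<le> k*(a-2)" using a3 by (intro mult_le_mono2) arith
    hence "k \<le> a*y" using yh by linarith
    hence y1: "1 \<le> y" using kbig a3 by (cases y) auto
    have "k*(a-1) \<le> k*a" by simp
    moreover have "k*a = a*k" by simp
    ultimately have "a*y \<le> a*k" using yh by linarith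
    hence "y \<le> k" using a0 by simp
    hence yC: "y \<le> C" using kC by simp
    have blk: "\<forall>y'. a-2 \<le> y' \<and> y' \<le> a-1 \<longrightarrow> col y' = True"
    proof (intro allI impI)
      fix y' assume "a-2 \<le> y' \<and> y' \<le> a-1"
      hence "y' = a-2 \<or> y' = a-1" using a3 by arith
      thus "col y' = True" using assms(3,4) by auto
    qed
    show False
      apply (rule noB[of "a-2" "a-1" True y y 0])
      using blk a3 cy y1 yC kbig yh kC by auto
  qed
  have redI: "\<forall>x. a-2 \<le> x \<and> x \<le> a-1+d \<longrightarrow> col x" if "a-1+d \<le> q-1" for d
    using that
  proof (induction d)
    case 0
    show ?case
    proof (intro allI impI)
      fix y' assume "a-2 \<le> y' \<and> y' \<le> a-1+0"
      hence "y' = a-2 \<or> y' = a-1" using a3 by arith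
      thus "col y'" using assms(3,4) by auto
    qed
  next
    case (Suc d)
    define r where "r = a-1+d"
    have IH: "\<forall>x. a-2 \<le> x \<and> x \<le> r \<longrightarrow> col x" using Suc unfolding r_def by simp
    have rq: "r+2 \<le> q" using Suc.prems q2a unfolding r_def by simp
    have ra: "a \<le> r+1" using a3 by (simp add: r_def)
    have cr: "col (r+1)"
    proof (rule ccontr)
      assume ncr: "\<not> col (r+1)"
      define L where "L = (k*(a-2) + a - 1) div a"
      have Lb: "k*(a-2) \<le> a*L" "a*L \<le> k*(a-2) + a - 1" using ceil_up[OF a0, of "k*(a-2)"] L_def by auto
      define S where "S = (k-1)*(r+1)"
      define t where "t = (S + L + a - 1) div a"
      define y where "y = L + (a-1) - (S + L + a - 1) mod a"
      have ymod: "(S + L + a - 1) mod a \<le> a - 1" using mod_less_divisor[OF a0, of "S+L+a-1"] by linarith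
      have yL: "L \<le> y" "y \<le> L + (a-1)" using ymod unfolding y_def by auto
      have "S + L + a - 1 - (S + L + a - 1) mod a = a * t" unfolding t_def by (rule minus_mod_eq_mult_div)
      hence at: "a*t = S + y" unfolding y_def using ymod a0 by linarith
      have ay1: "k*(a-2) \<le> a*y" using Lb yL by (meson le_trans mult_le_mono2)
      have "a*y \<le> a*(L + (a-1))" using yL(2) by (rule mult_le_mono2)
      also have "\<dots> = a*L + a*a - a" using a0 by (simp add: algebra_simps)
      finally have "a*y \<le> a*L + a*a - a" .
      moreover have "k*(a-1) = k*(a-2) + k"
      proof -
        have "a - 1 = (a-2) + 1" using a3 by arith
        hence "k*(a-1) = k*((a-2)+1)" by simp
        thus ?thesis by (simp only: distrib_left mult_1_right)
      qed
      ultimately have ay2: "a*y \<le> k*(a-1)" using Lb aak aa by linarith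
      have yb: "\<not> col y" using blueY[OF ay1 ay2] .
      have "k*1 \<le> k*(a-2)" using a3 by (intro mult_le_mono2) arith
      hence "k \<le> a*y" using ay1 by linarith
      hence y1: "1 \<le> y" using kbig a3 by (cases y) auto
      have "k*(a-1) \<le> k*a" by simp
      moreover have "k*a = a*k" by simp
      ultimately have "a*y \<le> a*k" using ay2 by linarith
      hence "y \<le> k" using a0 by simp
      hence yC: "y \<le> C" and yk: "y \<le> k" using kC by simp_all
      have "S \<le> k*(r+1)" unfolding S_def by (rule mult_le_mono1) simp
      hence "S + y \<le> k*(r+2)" using yk by (simp add: algebra_simps)
      also have "\<dots> \<le> k*q" using rq by (rule mult_le_mono2)
      finally have "a*t \<le> a*C" using at Cb(1) by linarith
      hence tC: "t \<le> C" using a0 by simp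
      have t1: "1 \<le> t" using at y1 by (cases t) auto
      have r1C: "r+1 \<le> C" using rq kq kC by simp
      have "S \<ge> (k-1)*a" unfolding S_def using ra by (rule mult_le_mono2)
      moreover have "(k-1)*a = a*(k-1)" by simp
      ultimately have "a*(k-1) \<le> a*t" using at by linarith
      hence tk: "k-1 \<le> t" using a0 by simp
      show False
      proof (cases "col t")
        case False
        show False
          apply (rule no3[of "k-1" 1 "r+1" y y t])
          using False ncr yb y1 yC tC t1 r1C at kbig a3 unfolding S_def by auto
      next
        case True
        have e1: "a*t - 2*t = (a-2)*t" by (simp add: diff_mult_distrib)
        have "(k-2)*(a-2) \<le> t*(a-2)" using tk by (intro mult_le_mono1) simp
        hence c1: "(k-2)*(a-2) \<le> a*t - 2*t" using e1 by (simp add: mult.commute)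
        have m1: "a*(a*((a-2)*t)) = a*((a-2)*(a*t))" by (simp add: mult.left_commute)
        have m2: "a*((a-2)*(a*t)) = a*((a-2)*S) + (a-2)*(a*y)" unfolding at
          by (simp add: distrib_left mult.left_commute)
        have m3: "(a-2)*(a*y) \<le> (a-2)*(k*(a-1))" using ay2 by (rule mult_le_mono2)
        have m4: "a*((a-2)*S) = a*(a-2)*(k-1)*(r+1)" unfolding S_def by (simp only: mult.assoc)
        have m5: "(a-2)*(k*(a-1)) = (a-2)*(a-1)*k" by (simp add: ac_simps)
        have m6: "a*(a-2)*(k-1)*(r+1) + (a-2)*(a-1)*k \<le> a*a*(k-2)*r"
          using ineqF[OF a3 hk] ra by simp
        have m7: "a*a*(k-2)*r = a*(a*((k-2)*r))" by (simp add: mult.assoc)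
        have "a*(a*((a-2)*t)) \<le> a*(a*((k-2)*r))" using m1 m2 m3 m4 m5 m6 m7 by linarith
        hence "(a-2)*t \<le> (k-2)*r" using a0 by simp
        hence c2: "a*t - 2*t \<le> (k-2)*r" using e1 by simp
        show False
          apply (rule noB[of "a-2" r True t t 2])
          using IH True a3 ra r1C t1 tC kbig c1 c2 by auto
      qed
    qed
    show ?case
    proof (intro allI impI)
      fix x assume "a-2 \<le> x \<and> x \<le> a-1+Suc d"
      hence "a-2 \<le> x \<and> x \<le> r \<or> x = r+1" unfolding r_def by auto
      thus "col x" using IH cr by auto
    qed
  qed
  have redIq: "\<forall>x. a-2 \<le> x \<and> x \<le> q-1 \<longrightarrow> col x"
  proof -
    have e: "a-1+(q-1-(a-1)) = q-1" using q2a by simp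
    show ?thesis using redI[of "q-1-(a-1)"] unfolding e by simp
  qed
  have redA: "col x" if "1 \<le> x" "x \<le> q-1" for x
  proof (cases "a-2 \<le> x")
    case True then show ?thesis using redIq that by auto
  next
    case False
    note xa = False
    show ?thesis
    proof (rule ccontr)
      assume nx: "\<not> col x"
      define w where "w = k - a + x"
      have w1: "1 \<le> w" "w \<le> k" using kbig False unfolding w_def by auto
      have weq: "(k-a+x)*x + (a-x)*w = a*w"
      proof -
        have "(k-a+x)*x + (a-x)*w = w*(x + (a-x))" unfolding w_def by (simp add: algebra_simps)
        also have "x + (a-x) = a" using False by simp
        finally show ?thesis by simp
      qed
      show False
      proof (cases "col w")
        case False
        show False
          apply (rule no3[of "k-a+x" "a-x" x w w w])
          using False nx w1 kC kq that weq kbig q2a xa by auto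
      next
        case True
        have blk: "\<forall>y. a-2 \<le> y \<and> y \<le> a \<longrightarrow> col y = True" using redIq q2a by auto
        have "a*(k-a) + a*a = a*k" using kbig by (simp add: algebra_simps diff_mult_distrib2)
        moreover have "k*(a-2) + 2*k = k*a" using a3 by (simp add: algebra_simps diff_mult_distrib2)
        moreover have "a*(k-a) \<le> a*w" unfolding w_def by simp
        moreover have "a*k = k*a" by simp
        ultimately have c1: "k*(a-2) \<le> a*w" using aak by linarith
        have "a*w \<le> a*k" using w1 by simp
        hence c2: "a*w \<le> k*a" by (simp add: mult.commute)
        show False
          apply (rule noB[of "a-2" a True w w 0])
          using blk True w1 kC a3 kbig c1 c2 q2a by auto
      qed
    qed
  qed
  have blk12: "\<forall>y. 1 \<le> y \<and> y \<le> 2 \<longrightarrow> col y = True" using redA q2a a3 by auto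
  have nq: "\<not> col q"
  proof
    assume "col q"
    show False
      apply (rule noB[of 1 2 True q q 0])
      using blk12 \<open>col q\<close> q2a kq kC kbig qb by auto
  qed
  have nq1: "\<not> col (q+1)"
  proof
    assume "col (q+1)"
    show False
      apply (rule noB[of 1 2 True "q+1" "q+1" 0])
      using blk12 \<open>col (q+1)\<close> q2a kq kC C2k kbig qb by (auto simp: algebra_simps)
  qed
  have cC: "col C"
  proof (rule ccontr)
    assume "\<not> col C"
    have blk: "\<forall>y. q \<le> y \<and> y \<le> q+1 \<longrightarrow> col y = False" using nq nq1
      by (metis le_Suc_eq le_antisym add.commute plus_1_eq_Suc)
    show False
      apply (rule noB[of q "q+1" False C C 0])
      using blk \<open>\<not> col C\<close> q2a kq kC kbig Cb C2k by (auto simp: algebra_simps)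
  qed
  have blk: "\<forall>y. a-2 \<le> y \<and> y \<le> q-1 \<longrightarrow> col y = True" using redIq by auto
  have e1: "a*C - 1*C = (a-1)*C" by (simp add: diff_mult_distrib)
  have "(k-1)*(a-2) \<le> k*(a-1)" by (intro mult_le_mono) auto
  also have "\<dots> \<le> C*(a-1)" using kC by (intro mult_le_mono1) simp
  finally have c1: "(k-1)*(a-2) \<le> a*C - 1*C" using e1 by (simp add: mult.commute)
  have "a*((a-1)*C) = (a-1)*(a*C)" by simp
  also have "\<dots> \<le> (a-1)*(k*q + a - 1)" using Cb(2) by (intro mult_le_mono2) simp
  also have "\<dots> \<le> a*(k-1)*(q-1)" using ineqG[OF a3 hk q2a] .
  finally have "(a-1)*C \<le> (k-1)*(q-1)" using a0 by (simp add: ac_simps)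
  hence c2: "a*C - 1*C \<le> (k-1)*(q-1)" using e1 by simp
  show False
    apply (rule noB[of "a-2" "q-1" True C C 1])
    using blk cC a3 q2a kq kC C2k kbig c1 c2 by auto
qed

end
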